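(* Let $K\in\mathbb{N}$ and let $\mathcal{P}$ be a family of probability density functions on $\mathbb{R}^K$ such that every $p\in\mathcal{P}$ has finite differential entropy $h(p) := -\int p(\mathbf{x})\log p(\mathbf{x})\,\mathrm{d}\mathbf{x}\in\mathbb{R}$. Assume that $\mathcal{P}$ is convex (for all $\alpha\in[0,1]$ and $p,q\in\mathcal{P}$ we have $\alpha p+(1-\alpha)q\in\mathcal{P}$) and that $\sup_{q\in\mathcal{P}}|h(q)|=\infty$. Fix a sample size $N\in\mathbb{N}$ and an arbitrary (measurable) estimator $\hat h\colon(\mathbb{R}^K)^N\to\mathbb{R}$. Then for any pair of constants $C,\delta>0$ there exists a continuous random vector $\mathbf{x}\sim p\in\mathcal{P}$ such that, with $\mathcal{D}=(\mathbf{x}_1,\dots,\mathbf{x}_N)$ consisting of $N$ i.i.d. copies of $\mathbf{x}$, \[ \Pr\big(|h(p)-\hat h(\mathcal{D})|\le C\big)\le\delta . \]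
   Context: Differential entropy of a density $p$ on $\mathbb{R}^K$ is $h(p)=-\int p\log p\,\mathrm{d}\lambda^K$, where $\lambda^K$ is Lebesgue measure. *)

theory Defs
  imports "HOL-Probability.Probability"
begin

definition is_pdf :: "('a::euclidean_space \<Rightarrow> real) \<Rightarrow> bool" where
  "is_pdf p \<longleftrightarrow> p \<in> borel_measurable lborel \<and> (\<forall>x. 0 \<le> p x) \<and>
     integrable lborel p \<and> integral\<^sup>L lborel p = 1"

text \<open>Finiteness of differential entropy: p log p is Lebesgue integrable
  (convention 0 log 0 = 0, which matches ln 0 = 0 in Isabelle).\<close>
definition finite_entropy :: "('a::euclidean_space \<Rightarrow> real) \<Rightarrow> bool" where
  "finite_entropy p \<longleftrightarrow> integrable lborel (\<lambda>x. p x * ln (p x))"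

definition diff_entropy :: "('a::euclidean_space \<Rightarrow> real) \<Rightarrow> real" where
  "diff_entropy p = - (\<integral>x. p x * ln (p x) \<partial>lborel)"

definition sample_measure :: "nat \<Rightarrow> ('a::euclidean_space \<Rightarrow> real) \<Rightarrow> (nat \<Rightarrow> 'a) measure" where
  "sample_measure N p = PiM {..<N} (\<lambda>_. density lborel (\<lambda>x. ennreal (p x)))"

end

theory Submission
  imports Defs
begin

lemma pdf_prob_space:
  assumes "is_pdf (p::'a::euclidean_space \<Rightarrow> real)"
  shows "prob_space (density lborel (\<lambda>x. ennreal (p x)))"
proof
  have "emeasure (density lborel (\<lambda>x. ennreal (p x))) (space (density lborel (\<lambda>x. ennreal (p x))))
      = (\<integral>\<^sup>+x. ennreal (p x) \<partial>lborel)"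
    using assms by (simp add: is_pdf_def emeasure_density)
  also have "\<dots> = ennreal (integral\<^sup>L lborel p)"
    using assms by (intro nn_integral_eq_integral) (auto simp: is_pdf_def)
  also have "\<dots> = 1" using assms by (simp add: is_pdf_def)
  finally show "emeasure (density lborel (\<lambda>x. ennreal (p x))) (space (density lborel (\<lambda>x. ennreal (p x)))) = 1" .
qed

lemma PiM_density_pdf:
  fixes p :: "'a::euclidean_space \<Rightarrow> real"
  assumes pdf: "is_pdf p" and I: "finite I"
  shows "PiM I (\<lambda>_. density lborel (\<lambda>x. ennreal (p x))) =
         density (PiM I (\<lambda>_. lborel)) (\<lambda>x. \<Prod>i\<in>I. ennreal (p (x i)))"
proof -
  have pm[measurable]: "p \<in> borel_measurable borel" using pdf by (simp add: is_pdf_def)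
  interpret ps: prob_space "density lborel (\<lambda>x. ennreal (p x))" by (rule pdf_prob_space[OF pdf])
  interpret product_sigma_finite "\<lambda>_. density lborel (\<lambda>x. ennreal (p x))"
    by (simp add: product_sigma_finite_def ps.sigma_finite_measure_axioms)
  interpret L: product_sigma_finite "\<lambda>_. lborel :: 'a measure" by standard
  have "density (PiM I (\<lambda>_. lborel)) (\<lambda>x. \<Prod>i\<in>I. ennreal (p (x i))) = PiM I (\<lambda>_. density lborel (\<lambda>x. ennreal (p x)))"
  proof (rule PiM_eqI[OF I])
    show "sets (density (PiM I (\<lambda>_. lborel)) (\<lambda>x. \<Prod>i\<in>I. ennreal (p (x i)))) = sets (PiM I (\<lambda>_. density lborel (\<lambda>x. ennreal (p x))))"
      unfolding sets_density by (rule sets_PiM_cong) auto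
  next
    fix A assume A: "\<And>i. i \<in> I \<Longrightarrow> A i \<in> sets (density lborel (\<lambda>x. ennreal (p x)))"
    then have A': "\<And>i. i \<in> I \<Longrightarrow> A i \<in> sets borel" by simp
    have PA: "Pi\<^sub>E I A \<in> sets (PiM I (\<lambda>_. lborel))"
      using A' I by (intro sets_PiM_I_finite) auto
    have "emeasure (density (PiM I (\<lambda>_. lborel)) (\<lambda>x. \<Prod>i\<in>I. ennreal (p (x i)))) (Pi\<^sub>E I A)
        = (\<integral>\<^sup>+x. (\<Prod>i\<in>I. ennreal (p (x i))) * indicator (Pi\<^sub>E I A) x \<partial>PiM I (\<lambda>_. lborel))"
      using PA I by (subst emeasure_density) auto
    also have "\<dots> = (\<integral>\<^sup>+x. (\<Prod>i\<in>I. ennreal (p (x i)) * indicator (A i) (x i)) \<partial>PiM I (\<lambda>_. lborel))"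
    proof (intro nn_integral_cong)
      fix x assume x: "x \<in> space (PiM I (\<lambda>_. lborel :: 'a measure))"
      have "indicator (Pi\<^sub>E I A) x = (\<Prod>i\<in>I. indicator (A i) (x i) :: ennreal)"
      proof (cases "x \<in> Pi\<^sub>E I A")
        case True then show ?thesis by (simp add: PiE_iff)
      next
        case False
        then obtain i where "i \<in> I" "x i \<notin> A i" using x by (auto simp: space_PiM PiE_iff)
        then show ?thesis using False I by (simp add: prod_zero_iff) (metis indicator_simps(2))
      qed
      then show "(\<Prod>i\<in>I. ennreal (p (x i))) * indicator (Pi\<^sub>E I A) x = (\<Prod>i\<in>I. ennreal (p (x i)) * indicator (A i) (x i))"
        by (simp add: prod.distrib)
    qed
    also have "\<dots> = (\<Prod>i\<in>I. (\<integral>\<^sup>+y. ennreal (p y) * indicator (A i) y \<partial>lborel))"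
      using A' I by (intro L.product_nn_integral_prod) auto
    also have "\<dots> = (\<Prod>i\<in>I. emeasure (density lborel (\<lambda>x. ennreal (p x))) (A i))"
      using A' by (intro prod.cong refl) (simp add: emeasure_density)
    finally show "emeasure (density (PiM I (\<lambda>_. lborel)) (\<lambda>x. \<Prod>i\<in>I. ennreal (p (x i)))) (Pi\<^sub>E I A)
        = (\<Prod>i\<in>I. emeasure (density lborel (\<lambda>x. ennreal (p x))) (A i))" .
  qed
  then show ?thesis by simp
qed


lemma sample_compare:
  fixes p q :: "'a::euclidean_space \<Rightarrow> real"
  assumes p: "is_pdf p" and q: "is_pdf q" and c: "0 \<le> c" and le: "\<And>x. c * p x \<le> q x"
    and B: "B \<in> sets (sample_measure N p)"
  shows "c ^ N * measure (sample_measure N p) B \<le> measure (sample_measure N q) B"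
proof -
  have pm[measurable]: "p \<in> borel_measurable borel" using p by (simp add: is_pdf_def)
  have qm[measurable]: "q \<in> borel_measurable borel" using q by (simp add: is_pdf_def)
  interpret SP: prob_space "sample_measure N p"
    unfolding sample_measure_def by (rule prob_space_PiM) (rule pdf_prob_space[OF p])
  interpret SQ: prob_space "sample_measure N q"
    unfolding sample_measure_def by (rule prob_space_PiM) (rule pdf_prob_space[OF q])
  have B': "B \<in> sets (PiM {..<N} (\<lambda>_. lborel :: 'a measure))"
  proof -
    have "sets (sample_measure N p) = sets (PiM {..<N} (\<lambda>_. lborel :: 'a measure))"
      unfolding sample_measure_def by (rule sets_PiM_cong) auto
    then show ?thesis using B by simp
  qed
  have ep: "emeasure (sample_measure N p) B = (\<integral>\<^sup>+x. (\<Prod>i\<in>{..<N}. ennreal (p (x i))) * indicator B x \<partial>PiM {..<N} (\<lambda>_. lborel))"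
    unfolding sample_measure_def PiM_density_pdf[OF p finite_lessThan] using B' by (subst emeasure_density) auto
  have eq: "emeasure (sample_measure N q) B = (\<integral>\<^sup>+x. (\<Prod>i\<in>{..<N}. ennreal (q (x i))) * indicator B x \<partial>PiM {..<N} (\<lambda>_. lborel))"
    unfolding sample_measure_def PiM_density_pdf[OF q finite_lessThan] using B' by (subst emeasure_density) auto
  have pw: "ennreal (c ^ N) * ((\<Prod>i\<in>{..<N}. ennreal (p (x i))) * indicator B x) \<le> (\<Prod>i\<in>{..<N}. ennreal (q (x i))) * indicator B x" for x
  proof -
    have "ennreal (c ^ N) * (\<Prod>i\<in>{..<N}. ennreal (p (x i))) = (\<Prod>i\<in>{..<N}. ennreal (c * p (x i)))"
      using p c by (simp add: prod.distrib ennreal_mult' prod_constant ennreal_power)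
    also have "\<dots> \<le> (\<Prod>i\<in>{..<N}. ennreal (q (x i)))"
    proof -
      have "\<And>i. 0 \<le> c * p (x i)" using p c by (simp add: is_pdf_def)
      then have "(\<Prod>i\<in>{..<N}. ennreal (c * p (x i))) = ennreal (\<Prod>i\<in>{..<N}. c * p (x i))"
        by (simp add: prod_ennreal)
      also have "\<dots> \<le> ennreal (\<Prod>i\<in>{..<N}. q (x i))"
        using \<open>\<And>i. 0 \<le> c * p (x i)\<close> le by (intro ennreal_leI prod_mono) auto
      also have "\<dots> = (\<Prod>i\<in>{..<N}. ennreal (q (x i)))"
        using q by (simp add: prod_ennreal is_pdf_def)
      finally show ?thesis .
    qed
    finally show ?thesis by (simp add: indicator_def mult.assoc[symmetric])
  qed
  have "ennreal (c ^ N) * emeasure (sample_measure N p) B \<le> emeasure (sample_measure N q) B"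
    unfolding ep eq using B'
    by (subst nn_integral_cmult[symmetric]) (auto intro!: nn_integral_mono pw)
  then have "ennreal (c ^ N * measure (sample_measure N p) B) \<le> ennreal (measure (sample_measure N q) B)"
    by (simp add: SP.emeasure_eq_measure SQ.emeasure_eq_measure ennreal_mult' c)
  then show ?thesis by (simp add: ennreal_le_iff)
qed


lemma xlnx_aux:
  fixes a m :: real
  assumes "0 \<le> a" "0 < m"
  shows "a - m \<le> a * ln a - a * ln m"
proof (cases "a = 0")
  case True then show ?thesis using assms by simp
next
  case False
  then have a: "0 < a" using assms by simp
  have "ln (m / a) \<le> m / a - 1" using a assms by (intro ln_le_minus_one) auto
  then have "a * ln (m / a) \<le> a * (m / a - 1)" using a by (intro mult_left_mono) auto
  also have "\<dots> = m - a" using a by (simp add: field_simps)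
  finally show ?thesis using a assms by (simp add: ln_div algebra_simps)
qed

lemma xlnx_convex:
  fixes a b t :: real
  assumes a: "0 \<le> a" and b: "0 \<le> b" and t: "0 \<le> t" "t \<le> 1"
  shows "(t*a + (1-t)*b) * ln (t*a + (1-t)*b) \<le> t * (a * ln a) + (1-t) * (b * ln b)"
proof -
  define m where "m = t*a + (1-t)*b"
  have m0: "0 \<le> m" unfolding m_def using a b t by simp
  show ?thesis
  proof (cases "m = 0")
    case True
    then have "t * a = 0" "(1-t)*b = 0" unfolding m_def using a b t
      by (smt (verit) mult_nonneg_nonneg)+
    then have z: "t * (a * ln a) + (1-t) * (b * ln b) = 0" by (metis add.commute add_0 mult.assoc mult.left_commute mult_zero_left)
    have "m * ln m = 0" using True by simp
    then show ?thesis using z unfolding m_def by linarith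
  next
    case False
    then have m: "0 < m" using m0 by simp
    have 1: "t * (a - m) \<le> t * (a * ln a - a * ln m)"
      using xlnx_aux[OF a m] t by (intro mult_left_mono) auto
    have 2: "(1-t) * (b - m) \<le> (1-t) * (b * ln b - b * ln m)"
      using xlnx_aux[OF b m] t by (intro mult_left_mono) auto
    have "t * (a - m) + (1-t) * (b - m) = 0" unfolding m_def by (simp add: algebra_simps)
    then have "0 \<le> t * (a * ln a - a * ln m) + (1-t) * (b * ln b - b * ln m)" using 1 2 by linarith
    then show ?thesis unfolding m_def[symmetric] by (simp add: m_def algebra_simps)
  qed
qed

lemma xlnx_super:
  fixes s u :: real
  assumes "0 \<le> s" "0 \<le> u"
  shows "s * ln s + u * ln u \<le> (s + u) * ln (s + u)"
proof -
  have "s * ln s \<le> s * ln (s + u)"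
    using assms by (cases "s = 0") (auto intro!: mult_left_mono)
  moreover have "u * ln u \<le> u * ln (s + u)"
    using assms by (cases "u = 0") (auto intro!: mult_left_mono)
  ultimately show ?thesis by (simp add: algebra_simps)
qed

lemma xlnx_scale:
  fixes a c :: real
  assumes "0 \<le> a" "0 < c"
  shows "(c * a) * ln (c * a) = c * (a * ln a) + (c * ln c) * a"
  using assms by (cases "a = 0") (auto simp: ln_mult algebra_simps)

lemma mix_entropy:
  fixes p r :: "'a::euclidean_space \<Rightarrow> real"
  assumes p: "is_pdf p" "finite_entropy p" and r: "is_pdf r" "finite_entropy r"
    and q: "finite_entropy (\<lambda>x. c * p x + \<alpha> * r x)"
    and \<alpha>: "0 < \<alpha>" "\<alpha> < 1" and c: "c = 1 - \<alpha>"
  shows "\<bar>diff_entropy (\<lambda>x. c * p x + \<alpha> * r x) - (c * diff_entropy p + \<alpha> * diff_entropy r)\<bar>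
          \<le> - c * ln c - \<alpha> * ln \<alpha>"
proof -
  have c0: "0 < c" using \<alpha> c by simp
  have ip: "integrable lborel p" "integral\<^sup>L lborel p = 1" "\<And>x. 0 \<le> p x" using p by (auto simp: is_pdf_def)
  have ir: "integrable lborel r" "integral\<^sup>L lborel r = 1" "\<And>x. 0 \<le> r x" using r by (auto simp: is_pdf_def)
  have fp: "integrable lborel (\<lambda>x. p x * ln (p x))" using p by (simp add: finite_entropy_def)
  have fr: "integrable lborel (\<lambda>x. r x * ln (r x))" using r by (simp add: finite_entropy_def)
  have fq: "integrable lborel (\<lambda>x. (c * p x + \<alpha> * r x) * ln (c * p x + \<alpha> * r x))"
    using q by (simp add: finite_entropy_def)
  have up: "(\<integral>x. (c * p x + \<alpha> * r x) * ln (c * p x + \<alpha> * r x) \<partial>lborel)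
      \<le> (\<integral>x. c * (p x * ln (p x)) + \<alpha> * (r x * ln (r x)) \<partial>lborel)"
  proof (rule integral_mono[OF fq])
    show "integrable lborel (\<lambda>x. c * (p x * ln (p x)) + \<alpha> * (r x * ln (r x)))" using fp fr by simp
    fix x
    show "(c * p x + \<alpha> * r x) * ln (c * p x + \<alpha> * r x) \<le> c * (p x * ln (p x)) + \<alpha> * (r x * ln (r x))"
      using xlnx_convex[OF ip(3)[of x] ir(3)[of x], of c] c \<alpha> by simp
  qed
  have lo: "(\<integral>x. c * (p x * ln (p x)) + \<alpha> * (r x * ln (r x)) + (c * ln c) * p x + (\<alpha> * ln \<alpha>) * r x \<partial>lborel)
      \<le> (\<integral>x. (c * p x + \<alpha> * r x) * ln (c * p x + \<alpha> * r x) \<partial>lborel)"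
  proof (rule integral_mono[OF _ fq])
    show "integrable lborel (\<lambda>x. c * (p x * ln (p x)) + \<alpha> * (r x * ln (r x)) + (c * ln c) * p x + (\<alpha> * ln \<alpha>) * r x)"
      using fp fr ip ir by simp
    fix x
    have "c * (p x * ln (p x)) + \<alpha> * (r x * ln (r x)) + (c * ln c) * p x + (\<alpha> * ln \<alpha>) * r x
        = (c * p x) * ln (c * p x) + (\<alpha> * r x) * ln (\<alpha> * r x)"
      using xlnx_scale[OF ip(3)[of x] c0] xlnx_scale[OF ir(3)[of x] \<alpha>(1)] by simp
    also have "\<dots> \<le> (c * p x + \<alpha> * r x) * ln (c * p x + \<alpha> * r x)"
      using c0 \<alpha> ip(3)[of x] ir(3)[of x] by (intro xlnx_super) auto
    finally show "c * (p x * ln (p x)) + \<alpha> * (r x * ln (r x)) + (c * ln c) * p x + (\<alpha> * ln \<alpha>) * r x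
        \<le> (c * p x + \<alpha> * r x) * ln (c * p x + \<alpha> * r x)" .
  qed
  have e1: "(\<integral>x. c * (p x * ln (p x)) + \<alpha> * (r x * ln (r x)) \<partial>lborel)
      = c * (\<integral>x. p x * ln (p x) \<partial>lborel) + \<alpha> * (\<integral>x. r x * ln (r x) \<partial>lborel)"
    using fp fr by simp
  have e2: "(\<integral>x. c * (p x * ln (p x)) + \<alpha> * (r x * ln (r x)) + (c * ln c) * p x + (\<alpha> * ln \<alpha>) * r x \<partial>lborel)
      = c * (\<integral>x. p x * ln (p x) \<partial>lborel) + \<alpha> * (\<integral>x. r x * ln (r x) \<partial>lborel) + c * ln c + \<alpha> * ln \<alpha>"
    using fp fr ip ir by simp
  show ?thesis
    using up lo unfolding e1 e2 diff_entropy_def by linarith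
qed


theorem proposition1:
  fixes P :: "('a::euclidean_space \<Rightarrow> real) set"
    and N :: nat
    and hhat :: "(nat \<Rightarrow> 'a) \<Rightarrow> real"
    and C \<delta> :: real
  assumes pdfs: "\<forall>p\<in>P. is_pdf p \<and> finite_entropy p"
    and convex: "\<forall>\<alpha>\<in>{0..1}. \<forall>p\<in>P. \<forall>q\<in>P. (\<lambda>x. \<alpha> * p x + (1 - \<alpha>) * q x) \<in> P"
    and unbounded: "\<not> bdd_above ((\<lambda>q. \<bar>diff_entropy q\<bar>) ` P)"
    and meas: "hhat \<in> borel_measurable (PiM {..<N} (\<lambda>_. lborel))"
    and C: "C > 0" and \<delta>: "\<delta> > 0"
  shows "\<exists>p\<in>P. measure (sample_measure N p)
            {D \<in> space (sample_measure N p). \<bar>diff_entropy p - hhat D\<bar> \<le> C} \<le> \<delta>"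
proof -
  have pdfP: "\<And>p. p \<in> P \<Longrightarrow> is_pdf p" and feP: "\<And>p. p \<in> P \<Longrightarrow> finite_entropy p"
    using pdfs by auto
  have ub: "\<And>B. \<exists>r\<in>P. B < \<bar>diff_entropy r\<bar>"
    using unbounded unfolding bdd_above_def by (auto simp: not_le)
  then obtain p0 where p0: "p0 \<in> P" by blast
  define \<alpha> where "\<alpha> = min (1/2) (\<delta> / (2 * (real N + 1)))"
  have \<alpha>: "0 < \<alpha>" "\<alpha> < 1" "\<alpha> \<le> \<delta> / (2 * (real N + 1))"
    unfolding \<alpha>_def using \<delta> by auto
  define c where "c = 1 - \<alpha>"
  have c: "0 < c" "c \<le> 1" using \<alpha> unfolding c_def by auto
  define Q where "Q r = (\<lambda>x. c * p0 x + \<alpha> * r x)" for r :: "'a \<Rightarrow> real"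
  have QP: "Q r \<in> P" if "r \<in> P" for r
  proof -
    have "c \<in> {0..1}" using c by simp
    then have "(\<lambda>x. c * p0 x + (1 - c) * r x) \<in> P" using convex p0 that by blast
    then show ?thesis unfolding Q_def c_def by simp
  qed
  define K0 where "K0 = - c * ln c - \<alpha> * ln \<alpha>"
  have bnd: "\<bar>diff_entropy (Q r) - (c * diff_entropy p0 + \<alpha> * diff_entropy r)\<bar> \<le> K0" if "r \<in> P" for r
    unfolding Q_def K0_def
    by (rule mix_entropy[OF pdfP[OF p0] feP[OF p0] pdfP[OF that] feP[OF that] _ \<alpha>(1,2) c_def])
       (rule feP[OF QP[OF that, unfolded Q_def]])
  have big: "\<exists>r\<in>P. B < \<bar>diff_entropy (Q r)\<bar>" for B
  proof -
    obtain r where r: "r \<in> P" "(\<bar>B\<bar> + \<bar>c * diff_entropy p0\<bar> + \<bar>K0\<bar>) / \<alpha> < \<bar>diff_entropy r\<bar>"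
      using ub by blast
    then have "\<bar>B\<bar> + \<bar>c * diff_entropy p0\<bar> + \<bar>K0\<bar> < \<alpha> * \<bar>diff_entropy r\<bar>"
      using \<alpha> by (simp add: field_simps)
    moreover have "\<bar>\<alpha> * diff_entropy r\<bar> = \<alpha> * \<bar>diff_entropy r\<bar>" using \<alpha> by (simp add: abs_mult)
    ultimately have "B < \<bar>diff_entropy (Q r)\<bar>" using bnd[OF r(1)] by linarith
    then show ?thesis using r by blast
  qed
  then obtain g where g: "\<And>B. g B \<in> P" "\<And>B. B < \<bar>diff_entropy (Q (g B))\<bar>" by metis
  define s where "s = rec_nat (g 0) (\<lambda>_ r. g (\<bar>diff_entropy (Q r)\<bar> + 2 * C))"
  define hs where "hs k = diff_entropy (Q (s k))" for k
  have sP: "s k \<in> P" for k by (cases k) (simp_all add: s_def g)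
  have step: "\<bar>hs k\<bar> + 2 * C < \<bar>hs (Suc k)\<bar>" for k
    unfolding hs_def s_def using g(2) by simp
  have mono: "\<bar>hs j\<bar> + 2 * C < \<bar>hs k\<bar>" if "j < k" for j k
    using that
  proof (induction k)
    case 0 then show ?case by simp
  next
    case (Suc k)
    show ?case
    proof (cases "j = k")
      case True then show ?thesis using step by simp
    next
      case False then have "j < k" using Suc by simp
      then show ?thesis using Suc.IH step[of k] C by linarith
    qed
  qed
  have sep: "2 * C < \<bar>hs j - hs k\<bar>" if "j \<noteq> k" for j k
  proof (cases "j < k")
    case True then show ?thesis using mono[of j k] by linarith
  next
    case False then have "k < j" using that by simp
    then show ?thesis using mono[of k j] by linarith
  qed
  define M :: nat where "M = nat \<lceil>2 / \<delta>\<rceil> + 1"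
  have M0: "0 < M" unfolding M_def by simp
  have "2 / \<delta> \<le> real M" unfolding M_def by linarith
  then have M1: "1 / real M \<le> \<delta> / 2" using \<delta> M0 by (simp add: field_simps)
  define S0 where "S0 = sample_measure N p0"
  interpret S0: prob_space S0
    unfolding S0_def sample_measure_def by (rule prob_space_PiM) (rule pdf_prob_space[OF pdfP[OF p0]])
  have setsS: "sets (sample_measure N p) = sets (PiM {..<N} (\<lambda>_. lborel :: 'a measure))" for p :: "'a \<Rightarrow> real"
    unfolding sample_measure_def by (rule sets_PiM_cong) auto
  have spaceS: "space (sample_measure N p) = space (PiM {..<N} (\<lambda>_. lborel :: 'a measure))" for p :: "'a \<Rightarrow> real"
    unfolding sample_measure_def by (simp add: space_PiM)
  have measS0[measurable]: "hhat \<in> borel_measurable S0"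
    using meas unfolding S0_def by (subst measurable_cong_sets[OF setsS refl])
  define E where "E k = {D \<in> space S0. \<bar>hs k - hhat D\<bar> \<le> C}" for k
  have Ek: "E k \<in> sets S0" for k unfolding E_def by measurable
  have disj: "disjoint_family_on E {..<M}"
    unfolding disjoint_family_on_def
  proof (intro ballI impI)
    fix j k assume "j \<in> {..<M}" "k \<in> {..<M}" "j \<noteq> k"
    then have "2 * C < \<bar>hs j - hs k\<bar>" by (intro sep)
    then show "E j \<inter> E k = {}" unfolding E_def by auto
  qed
  have "(\<Sum>k\<in>{..<M}. S0.prob (E k)) = S0.prob (\<Union>k\<in>{..<M}. E k)"
    using disj Ek by (intro S0.finite_measure_finite_Union[symmetric]) auto
  also have "\<dots> \<le> 1" by simp
  finally have sum1: "(\<Sum>k\<in>{..<M}. S0.prob (E k)) \<le> 1" .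
  obtain k where k: "k < M" "S0.prob (E k) \<le> 1 / real M"
  proof (rule ccontr)
    assume "\<not> thesis"
    with that have lt: "\<And>k. k \<in> {..<M} \<Longrightarrow> 1 / real M < S0.prob (E k)" by force
    have "(\<Sum>k\<in>{..<M}. 1 / real M) < (\<Sum>k\<in>{..<M}. S0.prob (E k))"
      using M0 lt by (intro sum_strict_mono) auto
    then show False using sum1 M0 by simp
  qed
  define q where "q = Q (s k)"
  have qP: "q \<in> P" unfolding q_def by (rule QP[OF sP])
  interpret Sq: prob_space "sample_measure N q"
    unfolding sample_measure_def by (rule prob_space_PiM) (rule pdf_prob_space[OF pdfP[OF qP]])
  have sp: "space (sample_measure N q) = space S0" unfolding S0_def by (simp add: spaceS)
  have set_eq: "{D \<in> space (sample_measure N q). \<bar>diff_entropy q - hhat D\<bar> \<le> C} = E k"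
    unfolding E_def sp hs_def q_def[symmetric] by simp
  have Eq: "E k \<in> sets (sample_measure N q)" using Ek unfolding S0_def by (simp add: setsS)
  have cmp: "c ^ N * S0.prob (space S0 - E k) \<le> Sq.prob (space S0 - E k)"
    unfolding S0_def
  proof (rule sample_compare[OF pdfP[OF p0] pdfP[OF qP]])
    show "0 \<le> c" using c by simp
    fix x show "c * p0 x \<le> q x"
      unfolding q_def Q_def using pdfP[OF sP[of k]] \<alpha> by (simp add: is_pdf_def)
  next
    show "space (sample_measure N p0) - E k \<in> sets (sample_measure N p0)"
      using Ek unfolding S0_def by auto
  qed
  have c1: "S0.prob (space S0 - E k) = 1 - S0.prob (E k)" using Ek by (simp add: S0.prob_compl)
  have c2: "Sq.prob (space S0 - E k) = 1 - Sq.prob (E k)"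
    using Eq Sq.prob_compl[OF Eq] sp by simp
  have cN: "c ^ N \<le> 1" "0 \<le> c ^ N" using c by (auto simp: power_le_one)
  have bern: "1 - real N * \<alpha> \<le> c ^ N"
    using Bernoulli_inequality[of "- \<alpha>" N] \<alpha> unfolding c_def by simp
  have Na: "real N * \<alpha> \<le> \<delta> / 2"
  proof -
    have "real N * \<alpha> \<le> real N * (\<delta> / (2 * (real N + 1)))" using \<alpha>(3) by (intro mult_left_mono) auto
    also have "\<dots> \<le> \<delta> / 2" using \<delta> by (simp add: field_simps)
    finally show ?thesis .
  qed
  have "c ^ N * S0.prob (E k) \<le> S0.prob (E k)" using cN by (simp add: mult_left_le_one_le)
  moreover have "c ^ N * (1 - S0.prob (E k)) = c ^ N - c ^ N * S0.prob (E k)"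
    by (simp add: right_diff_distrib)
  moreover have "c ^ N * (1 - S0.prob (E k)) \<le> 1 - Sq.prob (E k)" using cmp unfolding c1 c2 .
  ultimately have "Sq.prob (E k) \<le> \<delta>" using bern Na k(2) M1 cN
    by linarith
  then have "measure (sample_measure N q) {D \<in> space (sample_measure N q). \<bar>diff_entropy q - hhat D\<bar> \<le> C} \<le> \<delta>"
    unfolding set_eq .
  then show ?thesis using qP by blast
qed

end
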